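(* Let $n\ge 3$ and $3\le i\le n$. Then the subgroup $H_{\Delta_i}=\langle P_n(D),\Delta_i\rangle$ of $B_n(D)$ is not bi-orderable, where $\Delta_i=\sigma_1(\sigma_2\sigma_1)\cdots(\sigma_{i-1}\cdots\sigma_2\sigma_1)$.
   Context: $B_n(D)$ is the Artin braid group on $n$ strands, with generators $\sigma_1,\dots,\sigma_{n-1}$ and relations $\sigma_i\sigma_j=\sigma_j\sigma_i$ for $|i-j|\ge 2$ and $\sigma_i\sigma_{i+1}\sigma_i=\sigma_{i+1}\sigma_i\sigma_{i+1}$. The permutation homomorphism $\pi: B_n(D)\to S_n$ is given by $\pi(\sigma_i)=(i,i+1)$, and $P_n(D)=\ker\pi$. $\langle P_n(D),\beta\rangle$ is the subgroup generated by $P_n(D)$ and $\beta$. A group is bi-orderable if it admits a strict total ordering invariant under both left and right multiplication. *)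

theory Defs
  imports "HOL-Algebra.Group" "HOL-Algebra.Generated_Groups" "HOL-Combinatorics.Transposition"
begin

text \<open>Braid words: a letter (i, True) is sigma_i, (i, False) is sigma_i inverse.\<close>
type_synonym bword = "(nat \<times> bool) list"

definition braid_word :: "nat \<Rightarrow> bword \<Rightarrow> bool" where
  "braid_word n w \<longleftrightarrow> (\<forall>(i, b) \<in> set w. 1 \<le> i \<and> i < n)"

inductive braid_equiv :: "nat \<Rightarrow> bword \<Rightarrow> bword \<Rightarrow> bool" for n where
  refl: "braid_word n w \<Longrightarrow> braid_equiv n w w"
| sym: "braid_equiv n w v \<Longrightarrow> braid_equiv n v w"
| trans: "braid_equiv n u v \<Longrightarrow> braid_equiv n v w \<Longrightarrow> braid_equiv n u w"
| ctxt: "braid_equiv n x y \<Longrightarrow> braid_word n u \<Longrightarrow> braid_word n v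
          \<Longrightarrow> braid_equiv n (u @ x @ v) (u @ y @ v)"
| cancel: "1 \<le> i \<Longrightarrow> i < n \<Longrightarrow> braid_equiv n [(i, b), (i, \<not> b)] []"
| comm: "1 \<le> i \<Longrightarrow> i < n \<Longrightarrow> 1 \<le> j \<Longrightarrow> j < n \<Longrightarrow> i + 2 \<le> j
          \<Longrightarrow> braid_equiv n [(i, True), (j, True)] [(j, True), (i, True)]"
| braid: "1 \<le> i \<Longrightarrow> Suc i < n
          \<Longrightarrow> braid_equiv n [(i, True), (Suc i, True), (i, True)]
                             [(Suc i, True), (i, True), (Suc i, True)]"

definition braid_class :: "nat \<Rightarrow> bword \<Rightarrow> bword set" where
  "braid_class n w = {v. braid_word n v \<and> braid_equiv n w v}"

definition braid_group :: "nat \<Rightarrow> bword set monoid" where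
  "braid_group n = \<lparr> carrier = {braid_class n w | w. braid_word n w},
     mult = (\<lambda>A B. braid_class n ((SOME a. a \<in> A) @ (SOME b. b \<in> B))),
     one = braid_class n [] \<rparr>"

fun perm_of_word :: "bword \<Rightarrow> nat \<Rightarrow> nat" where
  "perm_of_word [] = id"
| "perm_of_word ((i, b) # w) = transpose i (Suc i) \<circ> perm_of_word w"

definition pure_braid_group :: "nat \<Rightarrow> bword set set" where
  "pure_braid_group n = {A \<in> carrier (braid_group n). \<exists>w \<in> A. perm_of_word w = id}"

definition Delta_word :: "nat \<Rightarrow> bword" where
  "Delta_word i = concat (map (\<lambda>j. map (\<lambda>k. (k, True)) (rev [1..<Suc j])) [1..<i])"

definition bi_orderable :: "('a, 'b) monoid_scheme \<Rightarrow> bool" where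
  "bi_orderable G \<longleftrightarrow> (\<exists>r :: 'a \<Rightarrow> 'a \<Rightarrow> bool.
     (\<forall>a \<in> carrier G. \<not> r a a) \<and>
     (\<forall>a \<in> carrier G. \<forall>b \<in> carrier G. \<forall>c \<in> carrier G. r a b \<longrightarrow> r b c \<longrightarrow> r a c) \<and>
     (\<forall>a \<in> carrier G. \<forall>b \<in> carrier G. a \<noteq> b \<longrightarrow> r a b \<or> r b a) \<and>
     (\<forall>a \<in> carrier G. \<forall>b \<in> carrier G. \<forall>c \<in> carrier G.
        r a b \<longrightarrow> r (c \<otimes>\<^bsub>G\<^esub> a) (c \<otimes>\<^bsub>G\<^esub> b) \<and> r (a \<otimes>\<^bsub>G\<^esub> c) (b \<otimes>\<^bsub>G\<^esub> c)))"

end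

theory Submission
  imports Defs
begin

lemma bw_Nil[simp]: "braid_word n []" by (simp add: braid_word_def)
lemma bw_Cons[simp]: "braid_word n (a # w) \<longleftrightarrow> 1 \<le> fst a \<and> fst a < n \<and> braid_word n w"
  by (cases a) (auto simp: braid_word_def)
lemma bw_append[simp]: "braid_word n (a @ b) \<longleftrightarrow> braid_word n a \<and> braid_word n b"
  by (auto simp: braid_word_def)

lemma be_words: "braid_equiv n x y \<Longrightarrow> braid_word n x \<and> braid_word n y"
  by (induction rule: braid_equiv.induct) auto

lemma betr: "braid_equiv n a b \<Longrightarrow> braid_equiv n c d \<Longrightarrow> b = c \<Longrightarrow> braid_equiv n a d"
  using braid_equiv.trans by blast

lemma be_app: "braid_equiv n a a' \<Longrightarrow> braid_equiv n b b' \<Longrightarrow> braid_equiv n (a @ b) (a' @ b')"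
proof -
  assume A: "braid_equiv n a a'" and B: "braid_equiv n b b'"
  have 1: "braid_equiv n ([] @ a @ b) ([] @ a' @ b)"
    by (rule braid_equiv.ctxt) (use A B be_words in auto)
  have 2: "braid_equiv n (a' @ b @ []) (a' @ b' @ [])"
    by (rule braid_equiv.ctxt) (use A B be_words in auto)
  show ?thesis using betr[OF 1 2] by simp
qed

lemma be_refl: "braid_word n w \<Longrightarrow> braid_equiv n w w" by (rule braid_equiv.refl)

lemma be_mid: "braid_equiv n x y \<Longrightarrow> braid_word n u \<Longrightarrow> braid_word n v
   \<Longrightarrow> braid_equiv n (u @ x @ v) (u @ y @ v)"
  by (rule braid_equiv.ctxt)

definition Dw :: "nat \<Rightarrow> bword" where
  "Dw m = map (\<lambda>k. (k, True)) (rev [1..<Suc m])"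
definition Uw :: "nat \<Rightarrow> bword" where
  "Uw m = map (\<lambda>k. (k, True)) [1..<Suc m]"

lemma Dw_0[simp]: "Dw 0 = []" by (simp add: Dw_def)
lemma Dw_Suc[simp]: "Dw (Suc m) = (Suc m, True) # Dw m" by (simp add: Dw_def)
lemma Uw_0[simp]: "Uw 0 = []" by (simp add: Uw_def)
lemma Uw_Suc[simp]: "Uw (Suc m) = Uw m @ [(Suc m, True)]" by (simp add: Uw_def)
lemma Delta_1[simp]: "Delta_word (Suc 0) = []" by (simp add: Delta_word_def)
lemma Delta_Suc: "1 \<le> m \<Longrightarrow> Delta_word (Suc m) = Delta_word m @ Dw m"
  by (simp add: Delta_word_def Dw_def)

lemma Dw_set: "(j, b) \<in> set (Dw m) \<Longrightarrow> b \<and> 1 \<le> j \<and> j \<le> m"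
  by (auto simp: Dw_def)
lemma Uw_set: "(j, b) \<in> set (Uw m) \<Longrightarrow> b \<and> 1 \<le> j \<and> j \<le> m"
  by (auto simp: Uw_def)
lemma Delta_set: "(j, b) \<in> set (Delta_word m) \<Longrightarrow> b \<and> 1 \<le> j \<and> j < m"
  by (auto simp: Delta_word_def)

lemma bw_Dw[simp]: "m < n \<Longrightarrow> braid_word n (Dw m)"
  using Dw_set unfolding braid_word_def by fastforce
lemma bw_Uw[simp]: "m < n \<Longrightarrow> braid_word n (Uw m)"
  using Uw_set unfolding braid_word_def by fastforce
lemma bw_Delta[simp]: "m \<le> n \<Longrightarrow> braid_word n (Delta_word m)"
  using Delta_set unfolding braid_word_def by fastforce

lemma be_comm_word:
  assumes "\<forall>(j, b) \<in> set w. b \<and> 1 \<le> j \<and> j + 2 \<le> k" "k < n" "1 \<le> k"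
  shows "braid_equiv n (w @ [(k, True)]) ((k, True) # w)"
  using assms
proof (induction w)
  case Nil
  then show ?case by (auto intro: be_refl)
next
  case (Cons a w)
  obtain j b where a: "a = (j, b)" by (cases a)
  have h: "b" "1 \<le> j" "j + 2 \<le> k" using Cons.prems a by auto
  have bw: "braid_word n w" using Cons.prems unfolding braid_word_def by fastforce
  have 1: "braid_equiv n ([a] @ (w @ [(k, True)]) @ []) ([a] @ ((k, True) # w) @ [])"
    by (rule be_mid) (use Cons h a in auto)
  have 2: "braid_equiv n ([] @ [(j, True), (k, True)] @ w) ([] @ [(k, True), (j, True)] @ w)"
    by (rule be_mid) (use h Cons.prems bw braid_equiv.comm[of j n k] in auto)
  show ?case using betr[OF 1 2] a h by simp
qed

lemma D_lemma:
  assumes "2 \<le> m" "m < n"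
  shows "braid_equiv n (Dw m @ [(m, True)]) ((m - 1, True) # Dw m)"
proof -
  obtain j where m: "m = Suc (Suc j)" using assms(1) by (metis add_2_eq_Suc le_Suc_ex)
  have c: "braid_equiv n (Dw j @ [(j+2, True)]) ((j+2, True) # Dw j)"
    by (rule be_comm_word) (use Dw_set assms m in fastforce)+
  have 1: "braid_equiv n ([(j+2, True), (j+1, True)] @ (Dw j @ [(j+2, True)]) @ [])
                         ([(j+2, True), (j+1, True)] @ ((j+2, True) # Dw j) @ [])"
    by (rule be_mid[OF c]) (use assms m in auto)
  have 2: "braid_equiv n ([] @ [(j+2, True), (j+1, True), (j+2, True)] @ Dw j)
                         ([] @ [(j+1, True), (j+2, True), (j+1, True)] @ Dw j)"
    by (rule be_mid) (use assms m braid_equiv.sym[OF braid_equiv.braid[of "j+1" n]] in auto)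
  show ?thesis using betr[OF 1 2] m by simp
qed

lemma U_lemma:
  assumes "2 \<le> m" "m < n"
  shows "braid_equiv n (Uw m @ [(m - 1, True)]) ((m, True) # Uw m)"
proof -
  obtain j where m: "m = Suc (Suc j)" using assms(1) by (metis add_2_eq_Suc le_Suc_ex)
  have c: "braid_equiv n (Uw j @ [(j+2, True)]) ((j+2, True) # Uw j)"
    by (rule be_comm_word) (use Uw_set assms m in fastforce)+
  have 1: "braid_equiv n (Uw j @ [(j+1, True), (j+2, True), (j+1, True)] @ [])
                         (Uw j @ [(j+2, True), (j+1, True), (j+2, True)] @ [])"
    by (rule be_mid) (use assms m braid_equiv.braid[of "j+1" n] in auto)
  have 2: "braid_equiv n ([] @ (Uw j @ [(j+2, True)]) @ [(j+1, True), (j+2, True)])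
                         ([] @ ((j+2, True) # Uw j) @ [(j+1, True), (j+2, True)])"
    by (rule be_mid[OF c]) (use assms m in auto)
  show ?thesis using betr[OF 1 2] m by simp
qed

lemma UD_lemma: "1 \<le> m \<Longrightarrow> m < n \<Longrightarrow> braid_equiv n (Uw m @ Delta_word m) (Delta_word (Suc m))"
proof (induction m rule: dec_induct)
  case base
  then show ?case by (simp add: Delta_Suc be_refl)
next
  case (step m)
  have c: "braid_equiv n (Delta_word m @ [(Suc m, True)]) ((Suc m, True) # Delta_word m)"
    by (rule be_comm_word) (use Delta_set step in fastforce)+
  have 1: "braid_equiv n (Uw m @ ((Suc m, True) # Delta_word m) @ Dw m)
                         (Uw m @ (Delta_word m @ [(Suc m, True)]) @ Dw m)"
    by (rule be_mid[OF braid_equiv.sym[OF c]]) (use step in auto)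
  have 2: "braid_equiv n ((Uw m @ Delta_word m) @ ((Suc m, True) # Dw m))
                         (Delta_word (Suc m) @ ((Suc m, True) # Dw m))"
    by (rule be_app[OF step.IH]) (use step in \<open>auto intro: be_refl\<close>)
  show ?case using betr[OF 1 2] step by (simp add: Delta_Suc)
qed

lemma A_lemma: "1 \<le> m \<Longrightarrow> m < n \<Longrightarrow>
   braid_equiv n (Delta_word (Suc m) @ [(m, True)]) ((1, True) # Delta_word (Suc m))"
proof (induction m rule: dec_induct)
  case base
  then show ?case by (simp add: Delta_Suc be_refl)
next
  case (step m)
  have d: "braid_equiv n (Dw (Suc m) @ [(Suc m, True)]) ((m, True) # Dw (Suc m))"
    using D_lemma[of "Suc m" n] step by simp
  have 1: "braid_equiv n (Delta_word (Suc m) @ (Dw (Suc m) @ [(Suc m, True)]) @ [])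
                         (Delta_word (Suc m) @ ((m, True) # Dw (Suc m)) @ [])"
    by (rule be_mid[OF d]) (use step in auto)
  have 2: "braid_equiv n ((Delta_word (Suc m) @ [(m, True)]) @ Dw (Suc m))
                         (((1, True) # Delta_word (Suc m)) @ Dw (Suc m))"
    by (rule be_app[OF step.IH]) (use step in \<open>auto intro: be_refl\<close>)
  show ?case using betr[OF 1 2] step by (simp add: Delta_Suc[of "Suc m"])
qed

lemma B_lemma: "1 \<le> m \<Longrightarrow> m < n \<Longrightarrow>
   braid_equiv n (Delta_word (Suc m) @ [(1, True)]) ((m, True) # Delta_word (Suc m))"
proof (induction m rule: dec_induct)
  case base
  then show ?case by (simp add: Delta_Suc be_refl)
next
  case (step m)
  have ud: "braid_equiv n (Uw (Suc m) @ Delta_word (Suc m)) (Delta_word (Suc (Suc m)))"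
    using UD_lemma[of "Suc m" n] step by simp
  have u: "braid_equiv n (Uw (Suc m) @ [(m, True)]) ((Suc m, True) # Uw (Suc m))"
    using U_lemma[of "Suc m" n] step by simp
  have 1: "braid_equiv n (Delta_word (Suc (Suc m)) @ [(1, True)])
                         ((Uw (Suc m) @ Delta_word (Suc m)) @ [(1, True)])"
    by (rule be_app[OF braid_equiv.sym[OF ud]]) (use step in \<open>auto intro: be_refl\<close>)
  have 2: "braid_equiv n (Uw (Suc m) @ (Delta_word (Suc m) @ [(1, True)]) @ [])
                         (Uw (Suc m) @ ((m, True) # Delta_word (Suc m)) @ [])"
    by (rule be_mid[OF step.IH]) (use step in auto)
  have 3: "braid_equiv n ((Uw (Suc m) @ [(m, True)]) @ Delta_word (Suc m))
                         (((Suc m, True) # Uw (Suc m)) @ Delta_word (Suc m))"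
    by (rule be_app[OF u]) (use step in \<open>auto intro: be_refl\<close>)
  have 4: "braid_equiv n ([(Suc m, True)] @ (Uw (Suc m) @ Delta_word (Suc m)))
                         ([(Suc m, True)] @ Delta_word (Suc (Suc m)))"
    by (rule be_app[OF _ ud]) (use step in \<open>auto intro: be_refl\<close>)
  have 12: "braid_equiv n (Delta_word (Suc (Suc m)) @ [(1, True)])
                         (Uw (Suc m) @ ((m, True) # Delta_word (Suc m)))"
    using betr[OF 1 2] by simp
  have 34: "braid_equiv n (Uw (Suc m) @ ((m, True) # Delta_word (Suc m)))
                          ((Suc m, True) # Delta_word (Suc (Suc m)))"
    using betr[OF 3 4] by simp
  show ?case using betr[OF 12 34] by simp
qed

declare braid_equiv.trans[trans]

lemma inv_lemma:
  assumes h: "braid_equiv n (w @ [(j, True)]) ((l, True) # w)" and "1 \<le> j" "j < n" "1 \<le> l" "l < n"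
  shows "braid_equiv n (w @ [(j, False)]) ((l, False) # w)"
proof -
  have bw: "braid_word n w" using be_words[OF h] by simp
  have c1: "braid_equiv n [(j, True), (j, False)] []" using braid_equiv.cancel[of j n True] assms by simp
  have c2: "braid_equiv n [(l, False), (l, True)] []" using braid_equiv.cancel[of l n False] assms by simp
  have 1: "braid_equiv n ([(l, False)] @ (w @ [(j, True)]) @ [(j, False)])
                         ([(l, False)] @ ((l, True) # w) @ [(j, False)])"
    by (rule be_mid[OF h]) (use assms in auto)
  have 2: "braid_equiv n (((l, False) # w) @ [(j, True), (j, False)] @ [])
                         (((l, False) # w) @ [] @ [])"
    by (rule be_mid[OF c1]) (use assms bw in auto)
  have 3: "braid_equiv n ([] @ [(l, False), (l, True)] @ w @ [(j, False)])
                         ([] @ [] @ w @ [(j, False)])"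
    by (rule be_mid[OF c2]) (use assms bw in auto)
  have "braid_equiv n ((l, False) # w) ((l, False) # w @ [(j, True), (j, False)])"
    using braid_equiv.sym[OF 2] by simp
  also have "braid_equiv n ((l, False) # w @ [(j, True), (j, False)]) (w @ [(j, False)])"
    using betr[OF 1 3] by simp
  finally show ?thesis by (rule braid_equiv.sym)
qed

fun lk_step :: "nat \<times> bool \<Rightarrow> (nat \<Rightarrow> nat) \<times> int \<Rightarrow> (nat \<Rightarrow> nat) \<times> int" where
  "lk_step (k, b) (p, c) = (p \<circ> transpose k (Suc k),
      c + (if {p k, p (Suc k)} = {1, 2} then (if b then 1 else -1) else 0))"

lemma lk_invariant: "braid_equiv n x y \<Longrightarrow> fold lk_step x = fold lk_step y"
proof (induction rule: braid_equiv.induct)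
  case (ctxt x y u v)
  then show ?case by (simp add: fold_append)
next
  case (cancel i b)
  show ?case
  proof (rule ext, clarify)
    fix p c
    show "fold lk_step [(i, b), (i, \<not> b)] (p, c) = fold lk_step [] (p, c)"
      by (auto simp: transpose_def fun_eq_iff insert_commute)
  qed
next
  case (comm i j)
  show ?case
  proof (rule ext, clarify)
    fix p c
    show "fold lk_step [(i, True), (j, True)] (p, c) = fold lk_step [(j, True), (i, True)] (p, c)"
      using comm by (auto simp: transpose_def fun_eq_iff)
  qed
next
  case (braid i)
  show ?case
  proof (rule ext, clarify)
    fix p c
    show "fold lk_step [(i, True), (Suc i, True), (i, True)] (p, c)
        = fold lk_step [(Suc i, True), (i, True), (Suc i, True)] (p, c)"
      by (auto simp: transpose_def fun_eq_iff insert_commute)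
  qed
qed auto

lemma no_order:
  assumes irr: "\<forall>a\<in>C. \<not> r a a"
    and tr: "\<forall>a\<in>C. \<forall>b\<in>C. \<forall>c\<in>C. r a b \<longrightarrow> r b c \<longrightarrow> r a c"
    and tot: "\<forall>a\<in>C. \<forall>b\<in>C. a \<noteq> b \<longrightarrow> r a b \<or> r b a"
    and mo: "\<forall>a\<in>C. \<forall>b\<in>C. \<forall>c\<in>C. r a b \<longrightarrow> r (m c a) (m c b) \<and> r (m a c) (m b c)"
    and C: "e \<in> C" "g \<in> C" "x \<in> C" "y \<in> C"
    and eq: "m e g = g" "m g e = g" "m e y = y" "m x e = x" "m x y = e" "m g x = m y g"
    and ne: "x \<noteq> e" and ygC: "m y g \<in> C"
  shows False
proof -
  have ye: "y \<noteq> e" using eq ne by metis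
  show False
  proof (cases "r e x")
    case True
    have 1: "r g (m y g)" using mo True C eq by metis
    have 2: "r e y"
    proof (rule ccontr)
      assume "\<not> r e y"
      then have "r y e" using tot ye C by metis
      then have "r (m y g) g" using mo C eq by metis
      then show False using 1 tr irr C ygC by metis
    qed
    have "r y e" using mo True C eq by metis
    then show False using 2 tr irr C by metis
  next
    case False
    then have True: "r x e" using tot ne C by metis
    have 1: "r (m y g) g" using mo True C eq by metis
    have 2: "r y e"
    proof (rule ccontr)
      assume "\<not> r y e"
      then have "r e y" using tot ye C by metis
      then have "r g (m y g)" using mo C eq by metis
      then show False using 1 tr irr C ygC by metis
    qed
    have "r e y" using mo True C eq by metis
    then show False using 2 tr irr C by metis
  qed
qed

lemma class_eq: "braid_equiv n w v \<Longrightarrow> braid_class n w = braid_class n v"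
  unfolding braid_class_def by (auto intro: braid_equiv.trans braid_equiv.sym)

lemma mem_class: "braid_word n w \<Longrightarrow> w \<in> braid_class n w"
  unfolding braid_class_def by (auto intro: braid_equiv.refl)

lemma mult_class:
  assumes "braid_word n w" "braid_word n v"
  shows "braid_class n w \<otimes>\<^bsub>braid_group n\<^esub> braid_class n v = braid_class n (w @ v)"
proof -
  define a where "a = (SOME a. a \<in> braid_class n w)"
  define b where "b = (SOME b. b \<in> braid_class n v)"
  have a: "a \<in> braid_class n w" unfolding a_def by (rule someI, rule mem_class[OF assms(1)])
  have b: "b \<in> braid_class n v" unfolding b_def by (rule someI, rule mem_class[OF assms(2)])
  have "braid_equiv n (w @ v) (a @ b)"
    using a b unfolding braid_class_def by (auto intro: be_app)
  then show ?thesis unfolding braid_group_def using class_eq a_def b_def by simp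
qed

lemma class_ne:
  assumes "braid_word n w" "fold lk_step w (id, 0) \<noteq> (id, 0)"
  shows "braid_class n w \<noteq> braid_class n []"
proof
  assume "braid_class n w = braid_class n []"
  then have "w \<in> braid_class n []" using mem_class[OF assms(1)] by simp
  then have "braid_equiv n [] w" unfolding braid_class_def by simp
  then have "fold lk_step [] = fold lk_step w" by (rule lk_invariant)
  then show False using assms(2) by (metis fold_Nil id_apply)
qed

lemma key_word:
  assumes "2 \<le> k" "k < n"
  shows "braid_equiv n (Delta_word (Suc k) @ [(1, True), (1, True), (k, False), (k, False)])
                       ([(k, True), (k, True), (1, False), (1, False)] @ Delta_word (Suc k))"
proof -
  let ?D = "Delta_word (Suc k)"
  have B: "braid_equiv n (?D @ [(1, True)]) ((k, True) # ?D)" using B_lemma[of k n] assms by simp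
  have A: "braid_equiv n (?D @ [(k, True)]) ((1, True) # ?D)" using A_lemma[of k n] assms by simp
  have Ai: "braid_equiv n (?D @ [(k, False)]) ((1, False) # ?D)"
    by (rule inv_lemma[OF A]) (use assms in auto)
  have s1: "braid_equiv n ([] @ (?D @ [(1, True)]) @ [(1, True), (k, False), (k, False)])
                          ([] @ ((k, True) # ?D) @ [(1, True), (k, False), (k, False)])"
    by (rule be_mid[OF B]) (use assms in auto)
  have s2: "braid_equiv n ([(k, True)] @ (?D @ [(1, True)]) @ [(k, False), (k, False)])
                          ([(k, True)] @ ((k, True) # ?D) @ [(k, False), (k, False)])"
    by (rule be_mid[OF B]) (use assms in auto)
  have s3: "braid_equiv n ([(k, True), (k, True)] @ (?D @ [(k, False)]) @ [(k, False)])
                          ([(k, True), (k, True)] @ ((1, False) # ?D) @ [(k, False)])"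
    by (rule be_mid[OF Ai]) (use assms in auto)
  have s4: "braid_equiv n ([(k, True), (k, True), (1, False)] @ (?D @ [(k, False)]) @ [])
                          ([(k, True), (k, True), (1, False)] @ ((1, False) # ?D) @ [])"
    by (rule be_mid[OF Ai]) (use assms in auto)
  have s12: "braid_equiv n (?D @ [(1, True), (1, True), (k, False), (k, False)])
                          ([(k, True), (k, True)] @ ?D @ [(k, False), (k, False)])"
    using betr[OF s1 s2] by simp
  have s34: "braid_equiv n ([(k, True), (k, True)] @ ?D @ [(k, False), (k, False)])
                          ([(k, True), (k, True), (1, False), (1, False)] @ ?D)"
    using betr[OF s3 s4] by simp
  show ?thesis using betr[OF s12 s34] by simp
qed

lemma cancel_word:
  assumes "2 \<le> k" "k < n"
  shows "braid_equiv n ([(1, True), (1, True), (k, False), (k, False)] @ [(k, True), (k, True), (1, False), (1, False)]) []"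
proof -
  have ck: "braid_equiv n [(k, False), (k, True)] []" using braid_equiv.cancel[of k n False] assms by simp
  have c1: "braid_equiv n [(1, True), (1, False)] []" using braid_equiv.cancel[of 1 n True] assms by simp
  have 1: "braid_equiv n ([(1, True), (1, True), (k, False)] @ [(k, False), (k, True)] @ [(k, True), (1, False), (1, False)])
      ([(1, True), (1, True), (k, False)] @ [] @ [(k, True), (1, False), (1, False)])"
    by (rule be_mid[OF ck]) (use assms in auto)
  have 2: "braid_equiv n ([(1, True), (1, True)] @ [(k, False), (k, True)] @ [(1, False), (1, False)])
      ([(1, True), (1, True)] @ [] @ [(1, False), (1, False)])"
    by (rule be_mid[OF ck]) (use assms in auto)
  have 3: "braid_equiv n ([(1, True)] @ [(1, True), (1, False)] @ [(1, False)])
      ([(1, True)] @ [] @ [(1, False)])"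
    by (rule be_mid[OF c1]) (use assms in auto)
  have 12: "braid_equiv n ([(1, True), (1, True), (k, False)] @ [(k, False), (k, True)] @ [(k, True), (1, False), (1, False)])
      ([(1, True)] @ [(1, True), (1, False)] @ [(1, False)])" using betr[OF 1 2] by simp
  have 123: "braid_equiv n ([(1, True), (1, True), (k, False)] @ [(k, False), (k, True)] @ [(k, True), (1, False), (1, False)])
      [(1, True), (1, False)]" using betr[OF 12 3] by simp
  show ?thesis using betr[OF 123 c1] by simp
qed

lemma lk_skip: "p j \<notin> {1, 2} \<Longrightarrow> lk_step (j, b) (p, c) = (p \<circ> transpose j (Suc j), c)"
  by auto

lemma lk_skip2: "p (Suc j) \<notin> {1, 2} \<Longrightarrow> lk_step (j, b) (p, c) = (p \<circ> transpose j (Suc j), c)"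
  by auto

lemma wx_link:
  assumes "2 \<le> k"
  shows "fold lk_step [(1::nat, True), (1::nat, True), (k, False), (k, False)] (id, 0) \<noteq> (id, 0)"
proof -
  have a1: "lk_step (1, True) (id, 0) = (transpose 1 2, 1)" by (simp add: numeral_2_eq_2)
  have a2: "lk_step (1, True) (transpose 1 2, 1) = (transpose 1 2 \<circ> transpose 1 2, 2)"
    by (simp add: numeral_2_eq_2 transpose_def insert_commute)
  have tt: "transpose (1::nat) 2 \<circ> transpose 1 2 = id" by (simp add: fun_eq_iff transpose_def)
  have a3: "lk_step (k, False) (id, 2) = (id \<circ> transpose k (Suc k), 2)"
    by (rule lk_skip2) (use assms in auto)
  have a4: "lk_step (k, False) (id \<circ> transpose k (Suc k), 2) = (id \<circ> transpose k (Suc k) \<circ> transpose k (Suc k), 2)"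
    by (rule lk_skip) (use assms in \<open>auto simp: transpose_def\<close>)
  show ?thesis using a1 a2 a3 a4 tt by simp
qed

theorem mainTheorem10:
  fixes n i :: nat
  assumes "3 \<le> n" and "3 \<le> i" and "i \<le> n"
  shows "\<not> bi_orderable ((braid_group n) \<lparr> carrier :=
            generate (braid_group n)
              (pure_braid_group n \<union> {braid_class n (Delta_word i)}) \<rparr>)"
proof
  define k where "k = i - 1"
  have k: "2 \<le> k" "k < n" "i = Suc k" using assms unfolding k_def by auto
  define G where "G = braid_group n"
  define C where "C = generate G (pure_braid_group n \<union> {braid_class n (Delta_word i)})"
  define wx where "wx = [(1::nat, True), (1::nat, True), (k, False), (k, False)]"
  define wy where "wy = [(k, True), (k, True), (1::nat, False), (1::nat, False)]"
  define e where "e = braid_class n []"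
  define g where "g = braid_class n (Delta_word i)"
  define x where "x = braid_class n wx"
  define y where "y = braid_class n wy"
  have bwx: "braid_word n wx" and bwy: "braid_word n wy" and bwD: "braid_word n (Delta_word i)"
    using k assms by (auto simp: wx_def wy_def)
  have ptx: "perm_of_word wx = id" and pty: "perm_of_word wy = id"
    by (auto simp: wx_def wy_def fun_eq_iff transpose_def)
  have xP: "x \<in> pure_braid_group n"
    unfolding pure_braid_group_def braid_group_def x_def using bwx ptx mem_class[OF bwx] by auto
  have yP: "y \<in> pure_braid_group n"
    unfolding pure_braid_group_def braid_group_def y_def using bwy pty mem_class[OF bwy] by auto
  have eC: "e \<in> C" unfolding C_def e_def G_def
    using generate.one[of "braid_group n"] by (simp add: braid_group_def)
  have gC: "g \<in> C" unfolding C_def g_def by (auto intro: generate.incl)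
  have xC: "x \<in> C" unfolding C_def G_def using xP by (auto intro: generate.incl)
  have yC: "y \<in> C" unfolding C_def G_def using yP by (auto intro: generate.incl)
  let ?m = "mult G"
  have m: "\<And>w v. braid_word n w \<Longrightarrow> braid_word n v \<Longrightarrow> ?m (braid_class n w) (braid_class n v) = braid_class n (w @ v)"
    unfolding G_def by (rule mult_class)
  have ygC: "?m y g \<in> C" unfolding C_def using generate.eng yC gC C_def by metis
  have e1: "?m e g = g" using m[of "[]" "Delta_word i"] bwD by (simp add: e_def g_def)
  have e2: "?m g e = g" using m[of "Delta_word i" "[]"] bwD by (simp add: e_def g_def)
  have e3: "?m e y = y" using m[of "[]" wy] bwy by (simp add: e_def y_def)
  have e4: "?m x e = x" using m[of wx "[]"] bwx by (simp add: e_def x_def)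
  have e5: "?m x y = e" using m[OF bwx bwy] class_eq[OF cancel_word[OF k(1,2)]]
    by (simp add: e_def x_def y_def wx_def wy_def)
  have e6: "?m g x = ?m y g" using m[OF bwD bwx] m[OF bwy bwD] class_eq[OF key_word[OF k(1,2)]]
    by (simp add: g_def x_def y_def wx_def wy_def k(3))
  have ne: "x \<noteq> e" unfolding x_def e_def
    by (rule class_ne[OF bwx]) (use k wx_link in \<open>simp add: wx_def\<close>)
  assume "bi_orderable (braid_group n\<lparr>carrier := generate (braid_group n)
                (pure_braid_group n \<union> {braid_class n (Delta_word i)})\<rparr>)"
  then have bo: "bi_orderable (G\<lparr>carrier := C\<rparr>)" unfolding C_def G_def .
  have cc: "carrier (G\<lparr>carrier := C\<rparr>) = C" by simp
  have mm: "mult (G\<lparr>carrier := C\<rparr>) = mult G" by simp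
  from bo obtain r where
    irr: "\<forall>a\<in>C. \<not> r a a"
    and tr: "\<forall>a\<in>C. \<forall>b\<in>C. \<forall>c\<in>C. r a b \<longrightarrow> r b c \<longrightarrow> r a c"
    and tot: "\<forall>a\<in>C. \<forall>b\<in>C. a \<noteq> b \<longrightarrow> r a b \<or> r b a"
    and mo: "\<forall>a\<in>C. \<forall>b\<in>C. \<forall>c\<in>C. r a b \<longrightarrow> r (?m c a) (?m c b) \<and> r (?m a c) (?m b c)"
    unfolding bi_orderable_def cc mm by (elim exE conjE)
  show False
    by (rule no_order[OF irr tr tot mo eC gC xC yC e1 e2 e3 e4 e5 e6 ne ygC])
qed

end
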